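(* There is exactly one isomorphism class of two-dimensional evolution algebras $A$ over a field $\mathbb{K}$ such that $\dim(A^2)=1$ and $A^3=0$ (namely the algebra $A_6$ with natural basis $\{e_1,e_2\}$, $e_1^2=0$, $e_2^2=e_1$). Its square is $\mathfrak{D}_6$, and this algebra is associative.
   Context: An evolution algebra over $\mathbb{K}$ is a $\mathbb{K}$-algebra with a basis $\{e_i\}$ (natural basis) such that $e_ie_j=0$ for $i\neq j$. $A^2$ is the span of $\{xy:x,y\in A\}$ and $A^3$ the span of $\{xy:x\in A,y\in A^2\}$. For a natural basis $\{e_1,e_2\}$ with $e_1^2=\omega_{11}e_1+\omega_{21}e_2$, $e_2^2=\omega_{12}e_1+\omega_{22}e_2$, its pseudo-square is the subset of $\{L,T,R,D\}$ where $L,T,R,D$ are present iff $\omega_{11},\omega_{12},\omega_{22},\omega_{21}$ respectively are nonzero; the square of $A$ is the set of pseudo-squares of all natural bases; $\mathfrak{D}_6=\{\{D\},\{T\}\}$. *)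

theory Defs
  imports Main
begin

text \<open>A two-dimensional algebra over a field 'a is modelled on the coordinate
space 'a \<times> 'a (every 2-dimensional vector space is isomorphic to it) together
with a bilinear multiplication.\<close>

type_synonym 'a vec2 = "'a \<times> 'a"
type_synonym 'a alg2 = "'a vec2 \<Rightarrow> 'a vec2 \<Rightarrow> 'a vec2"

definition vzero :: "'a::field vec2" where "vzero = (0, 0)"

definition vadd :: "'a::field vec2 \<Rightarrow> 'a vec2 \<Rightarrow> 'a vec2" where
  "vadd u v = (fst u + fst v, snd u + snd v)"

definition smul :: "'a::field \<Rightarrow> 'a vec2 \<Rightarrow> 'a vec2" where
  "smul c u = (c * fst u, c * snd u)"

definition bilinear2 :: "'a::field alg2 \<Rightarrow> bool" where
  "bilinear2 M \<longleftrightarrow>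
     (\<forall>u v w. M (vadd u v) w = vadd (M u w) (M v w)) \<and>
     (\<forall>u v w. M u (vadd v w) = vadd (M u v) (M u w)) \<and>
     (\<forall>c u v. M (smul c u) v = smul c (M u v)) \<and>
     (\<forall>c u v. M u (smul c v) = smul c (M u v))"

text \<open>Two vectors of a 2-dimensional space form a basis iff they are linearly independent.\<close>
definition is_basis2 :: "'a::field vec2 \<Rightarrow> 'a vec2 \<Rightarrow> bool" where
  "is_basis2 b1 b2 \<longleftrightarrow>
     (\<forall>a b. vadd (smul a b1) (smul b b2) = vzero \<longrightarrow> a = 0 \<and> b = 0)"

definition natural_basis :: "'a::field alg2 \<Rightarrow> 'a vec2 \<Rightarrow> 'a vec2 \<Rightarrow> bool" where
  "natural_basis M b1 b2 \<longleftrightarrow> is_basis2 b1 b2 \<and> M b1 b2 = vzero \<and> M b2 b1 = vzero"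

definition evolution_algebra2 :: "'a::field alg2 \<Rightarrow> bool" where
  "evolution_algebra2 M \<longleftrightarrow> bilinear2 M \<and> (\<exists>b1 b2. natural_basis M b1 b2)"

inductive_set vspan :: "'a::field vec2 set \<Rightarrow> 'a vec2 set" for S where
  vspan_zero: "vzero \<in> vspan S"
| vspan_base: "s \<in> S \<Longrightarrow> s \<in> vspan S"
| vspan_add: "u \<in> vspan S \<Longrightarrow> v \<in> vspan S \<Longrightarrow> vadd u v \<in> vspan S"
| vspan_smul: "u \<in> vspan S \<Longrightarrow> smul c u \<in> vspan S"

definition alg_sq :: "'a::field alg2 \<Rightarrow> 'a vec2 set" where
  "alg_sq M = vspan {M x y | x y. True}"

definition alg_cube :: "'a::field alg2 \<Rightarrow> 'a vec2 set" where
  "alg_cube M = vspan {M x y | x y. y \<in> alg_sq M}"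

definition dim_one :: "'a::field vec2 set \<Rightarrow> bool" where
  "dim_one V \<longleftrightarrow> (\<exists>v. v \<noteq> vzero \<and> V = {smul c v | c. True})"

definition linear2 :: "('a::field vec2 \<Rightarrow> 'a vec2) \<Rightarrow> bool" where
  "linear2 f \<longleftrightarrow> (\<forall>u v. f (vadd u v) = vadd (f u) (f v)) \<and> (\<forall>c u. f (smul c u) = smul c (f u))"

definition alg_isomorphic :: "'a::field alg2 \<Rightarrow> 'a alg2 \<Rightarrow> bool" where
  "alg_isomorphic M N \<longleftrightarrow>
     (\<exists>f. linear2 f \<and> bij f \<and> (\<forall>x y. f (M x y) = N (f x) (f y)))"

definition alg_associative :: "'a::field alg2 \<Rightarrow> bool" where
  "alg_associative M \<longleftrightarrow> (\<forall>x y z. M (M x y) z = M x (M y z))"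

text \<open>The algebra A6: natural basis e1 = (1,0), e2 = (0,1), e1^2 = 0, e2^2 = e1,
  e1 e2 = e2 e1 = 0, extended bilinearly.\<close>
definition A6 :: "'a::field alg2" where
  "A6 u v = (snd u * snd v, 0)"

datatype letter = L | T | R | D

text \<open>Structure constants w.r.t. a natural basis: b1^2 = w11 b1 + w21 b2,
  b2^2 = w12 b1 + w22 b2 (unique since b1, b2 is a basis).\<close>
definition coords :: "'a::field vec2 \<Rightarrow> 'a vec2 \<Rightarrow> 'a vec2 \<Rightarrow> 'a \<times> 'a" where
  "coords b1 b2 v = (THE p. v = vadd (smul (fst p) b1) (smul (snd p) b2))"

definition pseudo_square :: "'a::field alg2 \<Rightarrow> 'a vec2 \<Rightarrow> 'a vec2 \<Rightarrow> letter set" where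
  "pseudo_square M b1 b2 =
     (let (w11, w21) = coords b1 b2 (M b1 b1); (w12, w22) = coords b1 b2 (M b2 b2) in
        {x. (x = L \<and> w11 \<noteq> 0) \<or> (x = T \<and> w12 \<noteq> 0) \<or> (x = R \<and> w22 \<noteq> 0) \<or> (x = D \<and> w21 \<noteq> 0)})"

definition alg_square :: "'a::field alg2 \<Rightarrow> letter set set" where
  "alg_square M = {pseudo_square M b1 b2 | b1 b2. natural_basis M b1 b2}"

definition D6 :: "letter set set" where
  "D6 = {{D}, {T}}"

end

theory Submission
  imports Defs
begin

lemma basis_iff: "is_basis2 (u::'a::field vec2) v \<longleftrightarrow> fst u * snd v - snd u * fst v \<noteq> 0"
proof
  assume h: "is_basis2 u v"
  obtain a b where u: "u = (a,b)" by (cases u)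
  obtain c d where v: "v = (c,d)" by (cases v)
  show "fst u * snd v - snd u * fst v \<noteq> 0"
  proof
    assume z: "fst u * snd v - snd u * fst v = 0"
    hence z': "a*d - b*c = 0" using u v by simp
    show False
    proof (cases "b \<noteq> 0 \<or> d \<noteq> 0")
      case True
      have "vadd (smul d u) (smul (-b) v) = vzero"
        using z' u v by (simp add: vadd_def smul_def vzero_def algebra_simps)
      then show False using h True unfolding is_basis2_def by force
    next
      case False
      show False
      proof (cases "a \<noteq> 0 \<or> c \<noteq> 0")
        case True
        have "vadd (smul c u) (smul (-a) v) = vzero"
          using False u v by (simp add: vadd_def smul_def vzero_def algebra_simps)
        then show False using h True unfolding is_basis2_def by force
      next
        case F2: False
        have "vadd (smul 1 u) (smul 0 v) = vzero"
          using False F2 u v by (simp add: vadd_def smul_def vzero_def)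
        then show False using h unfolding is_basis2_def by force
      qed
    qed
  qed
next
  assume h: "fst u * snd v - snd u * fst v \<noteq> 0"
  obtain a b where u: "u = (a,b)" by (cases u)
  obtain c d where v: "v = (c,d)" by (cases v)
  show "is_basis2 u v"
    unfolding is_basis2_def
  proof (intro allI impI)
    fix s t
    assume "vadd (smul s u) (smul t v) = vzero"
    hence e: "s*a + t*c = 0" "s*b + t*d = 0" using u v by (simp_all add: vadd_def smul_def vzero_def)
    have "s*(a*d - b*c) = d*(s*a+t*c) - c*(s*b+t*d)" by (simp add: algebra_simps)
    hence s0: "s*(a*d-b*c) = 0" using e by simp
    have "t*(a*d - b*c) = a*(s*b+t*d) - b*(s*a+t*c)" by (simp add: algebra_simps)
    hence t0: "t*(a*d-b*c) = 0" using e by simp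
    show "s = 0 \<and> t = 0" using s0 t0 h u v by simp
  qed
qed

lemma basis_span:
  assumes "is_basis2 (u::'a::field vec2) v"
  shows "\<exists>s t. x = vadd (smul s u) (smul t v)"
proof -
  obtain a b where u: "u = (a,b)" by (cases u)
  obtain c d where v: "v = (c,d)" by (cases v)
  obtain x1 x2 where x: "x = (x1,x2)" by (cases x)
  have dz: "a*d - b*c \<noteq> 0" using assms u v basis_iff by force
  define s where "s = (x1*d - x2*c)/(a*d-b*c)"
  define t where "t = (a*x2 - b*x1)/(a*d-b*c)"
  have e1: "s*a + t*c = x1"
  proof -
    have "s*a + t*c = ((x1*d - x2*c)*a + (a*x2 - b*x1)*c)/(a*d-b*c)"
      unfolding s_def t_def by (simp add: add_divide_distrib)
    also have "(x1*d - x2*c)*a + (a*x2 - b*x1)*c = x1*(a*d-b*c)" by (simp add: algebra_simps)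
    finally show ?thesis using dz by simp
  qed
  have e2: "s*b + t*d = x2"
  proof -
    have "s*b + t*d = ((x1*d - x2*c)*b + (a*x2 - b*x1)*d)/(a*d-b*c)"
      unfolding s_def t_def by (simp add: add_divide_distrib)
    also have "(x1*d - x2*c)*b + (a*x2 - b*x1)*d = x2*(a*d-b*c)" by (simp add: algebra_simps)
    finally show ?thesis using dz by simp
  qed
  have "x = vadd (smul s u) (smul t v)"
    using e1 e2 unfolding u v x by (simp add: vadd_def smul_def)
  thus ?thesis by blast
qed

lemma basis_sym: "is_basis2 u v \<Longrightarrow> is_basis2 v u"
  by (simp add: basis_iff algebra_simps)

lemma coords_eq:
  assumes "is_basis2 b1 b2" "w = vadd (smul s b1) (smul t b2)"
  shows "coords b1 b2 w = (s,t)"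
  unfolding coords_def
proof (rule the_equality)
  show "w = vadd (smul (fst (s, t)) b1) (smul (snd (s, t)) b2)" using assms by simp
next
  fix p assume "w = vadd (smul (fst p) b1) (smul (snd p) b2)"
  hence "vadd (smul (fst p - s) b1) (smul (snd p - t) b2) = vzero"
    using assms(2) by (simp add: vadd_def smul_def vzero_def algebra_simps prod_eq_iff)
  thus "p = (s,t)" using assms(1) unfolding is_basis2_def by (metis eq_iff_diff_eq_0 prod.collapse)
qed

lemma bil_right:
  assumes "bilinear2 M"
  shows "M x (vadd (smul a u) (smul b w)) = vadd (smul a (M x u)) (smul b (M x w))"
proof -
  from assms have r1: "\<And>u v w. M u (vadd v w) = vadd (M u v) (M u w)"
    and r2: "\<And>c u v. M u (smul c v) = smul c (M u v)" unfolding bilinear2_def by blast+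
  show ?thesis by (simp only: r1 r2)
qed

lemma bil_left:
  assumes "bilinear2 M"
  shows "M (vadd (smul a u) (smul b w)) x = vadd (smul a (M u x)) (smul b (M w x))"
proof -
  from assms have r1: "\<And>u v w. M (vadd u v) w = vadd (M u w) (M v w)"
    and r2: "\<And>c u v. M (smul c u) v = smul c (M u v)" unfolding bilinear2_def by blast+
  show ?thesis by (simp only: r1 r2)
qed

lemma bil_smul:
  assumes "bilinear2 M"
  shows "M (smul a u) (smul b w) = smul (a*b) (M u w)"
proof -
  from assms have r1: "\<And>c u v. M (smul c u) v = smul c (M u v)"
    and r2: "\<And>c u v. M u (smul c v) = smul c (M u v)" unfolding bilinear2_def by blast+
  show ?thesis by (simp only: r1 r2) (simp add: smul_def algebra_simps)
qed

lemma vzero_simps[simp]: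
  "smul c vzero = vzero" "vadd vzero x = x" "vadd x vzero = x"
  by (simp_all add: smul_def vzero_def vadd_def)

lemma iso_from_basis:
  fixes M :: "'a::field alg2"
  assumes bl: "bilinear2 M" and b: "is_basis2 f1 f2"
    and z1: "M f1 f1 = vzero" and z2: "M f1 f2 = vzero" and z3: "M f2 f1 = vzero"
    and q: "M f2 f2 = f1"
  shows "alg_isomorphic M A6"
proof -
  define g where "g u = vadd (smul (fst u) f1) (smul (snd u) f2)" for u :: "'a vec2"
  have lin: "linear2 g" unfolding linear2_def g_def
    by (simp add: vadd_def smul_def algebra_simps)
  have inj: "inj g"
  proof (rule injI)
    fix u w assume "g u = g w"
    hence "vadd (smul (fst u - fst w) f1) (smul (snd u - snd w) f2) = vzero"
      unfolding g_def by (simp add: vadd_def smul_def vzero_def algebra_simps prod_eq_iff)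
    hence "fst u - fst w = 0 \<and> snd u - snd w = 0" using b unfolding is_basis2_def by blast
    thus "u = w" by (simp add: prod_eq_iff)
  qed
  have surj: "surj g"
  proof (rule surjI[where f = "\<lambda>x. SOME p. x = g p"])
    fix x
    obtain s t where "x = vadd (smul s f1) (smul t f2)" using basis_span[OF b] by blast
    hence "\<exists>p. x = g p" unfolding g_def by (metis fst_conv snd_conv)
    thus "g (SOME p. x = g p) = x" by (metis (mono_tags) someI_ex)
  qed
  have hom: "g (A6 u w) = M (g u) (g w)" for u w
    unfolding g_def
    by (simp add: bil_left[OF bl] bil_right[OF bl] z1 z2 z3 q A6_def)
       (simp add: vadd_def smul_def)
  have bij: "bij g" using inj surj by (simp add: bij_def)
  define f where "f = inv g"
  have fg: "f (g z) = z" for z unfolding f_def using inj by simp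
  have gf: "g (f y) = y" for y unfolding f_def using surj by (simp add: surj_f_inv_f)
  have la: "\<And>a b. g (vadd a b) = vadd (g a) (g b)" and lm: "\<And>c a. g (smul c a) = smul c (g a)"
    using lin unfolding linear2_def by blast+
  have "linear2 f" unfolding linear2_def
  proof (intro conjI allI)
    fix u v
    have "g (vadd (f u) (f v)) = vadd u v" by (simp only: la lm gf)
    thus "f (vadd u v) = vadd (f u) (f v)" by (metis fg)
  next
    fix c u
    have "g (smul c (f u)) = smul c u" by (simp only: la lm gf)
    thus "f (smul c u) = smul c (f u)" by (metis fg)
  qed
  moreover have "bij f" unfolding f_def using bij by (rule bij_imp_bij_inv)
  moreover have "f (M x y) = A6 (f x) (f y)" for x y
  proof -
    have "f (M x y) = f (M (g (f x)) (g (f y)))" by (simp add: gf)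
    also have "\<dots> = f (g (A6 (f x) (f y)))" by (simp add: hom)
    finally show ?thesis by (simp add: fg)
  qed
  ultimately show ?thesis unfolding alg_isomorphic_def by blast
qed

lemma case_lemma:
  fixes M :: "'a::field alg2"
  assumes bl: "bilinear2 M" and b: "is_basis2 b1 b2"
    and z2: "M b1 b2 = vzero" and z3: "M b2 b1 = vzero"
    and p: "M b1 b1 = vzero" and q: "M b2 b2 = smul k b1" and k: "k \<noteq> 0"
  shows "alg_isomorphic M A6"
proof (rule iso_from_basis[OF bl, of "smul k b1" b2])
  show "is_basis2 (smul k b1) b2" using b k by (simp add: basis_iff smul_def algebra_simps)
  have "M (smul k b1) (smul k b1) = smul (k*k) (M b1 b1)" by (rule bil_smul[OF bl])
  thus "M (smul k b1) (smul k b1) = vzero" using p by simp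
  have "M (smul k b1) (smul 1 b2) = smul (k*1) (M b1 b2)" by (rule bil_smul[OF bl])
  thus "M (smul k b1) b2 = vzero" using z2 by (simp add: smul_def vzero_def)
  have "M (smul 1 b2) (smul k b1) = smul (1*k) (M b2 b1)" by (rule bil_smul[OF bl])
  thus "M b2 (smul k b1) = vzero" using z3 by (simp add: smul_def vzero_def)
  show "M b2 b2 = smul k b1" by (rule q)
qed


lemma smul_zero_cases: "smul a (w::'a::field vec2) = vzero \<Longrightarrow> a = 0 \<or> w = vzero"
  by (cases w) (auto simp: smul_def vzero_def)

lemma smul_smul: "smul a (smul b w) = smul (a*b) w"
  by (simp add: smul_def algebra_simps)

lemma classify:
  fixes M :: "'a::field alg2"
  assumes ev: "evolution_algebra2 M" and d1: "dim_one (alg_sq M)" and c0: "alg_cube M = {vzero}"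
  shows "alg_isomorphic M A6"
proof -
  from ev have bl: "bilinear2 M" unfolding evolution_algebra2_def by blast
  from ev obtain b1 b2 where nb: "natural_basis M b1 b2" unfolding evolution_algebra2_def by blast
  hence b: "is_basis2 b1 b2" and z12: "M b1 b2 = vzero" and z21: "M b2 b1 = vzero"
    unfolding natural_basis_def by auto
  from d1 obtain v where v0: "v \<noteq> vzero" and sq: "alg_sq M = {smul c v | c. True}"
    unfolding dim_one_def by blast
  define p where "p = M b1 b1"
  define q where "q = M b2 b2"
  have "p \<in> alg_sq M" unfolding alg_sq_def p_def by (rule vspan_base) blast
  then obtain c1 where pc: "p = smul c1 v" using sq by auto
  have "q \<in> alg_sq M" unfolding alg_sq_def q_def by (rule vspan_base) blast
  then obtain c2 where qc: "q = smul c2 v" using sq by auto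
  have "v = smul 1 v" by (simp add: smul_def)
  hence vin: "v \<in> alg_sq M" using sq by blast
  have cube: "M x v = vzero" for x
  proof -
    have "M x v \<in> alg_cube M" unfolding alg_cube_def by (rule vspan_base) (use vin in blast)
    thus ?thesis using c0 by simp
  qed
  obtain a b where vab: "v = vadd (smul a b1) (smul b b2)" using basis_span[OF b] by blast
  have "M b1 v = vadd (smul a p) (smul b vzero)" by (simp only: vab bil_right[OF bl] p_def z12)
  hence ap: "smul a p = vzero" using cube by simp
  have "M b2 v = vadd (smul a vzero) (smul b q)" by (simp only: vab bil_right[OF bl] q_def z21)
  hence bq: "smul b q = vzero" using cube by simp
  have nz: "\<not> (p = vzero \<and> q = vzero)"
  proof
    assume pq: "p = vzero \<and> q = vzero"
    have allz: "M x y = vzero" for x y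
    proof -
      obtain s t where xs: "x = vadd (smul s b1) (smul t b2)" using basis_span[OF b] by blast
      obtain s' t' where ys: "y = vadd (smul s' b1) (smul t' b2)" using basis_span[OF b] by blast
      show ?thesis using pq unfolding xs ys
        by (simp add: bil_right[OF bl] bil_left[OF bl] z12 z21 p_def[symmetric] q_def[symmetric])
    qed
    have "w \<in> alg_sq M \<Longrightarrow> w = vzero" for w
      unfolding alg_sq_def
      by (induction rule: vspan.induct) (auto simp: allz)
    thus False using vin v0 by blast
  qed
  show ?thesis
  proof (cases "a = 0")
    case False
    hence p0: "p = vzero" using ap smul_zero_cases by blast
    hence q0: "q \<noteq> vzero" using nz by blast
    hence b0: "b = 0" using bq smul_zero_cases by blast
    have c20: "c2 \<noteq> 0" using q0 qc by (auto simp: smul_def vzero_def)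
    have "v = smul a b1" using vab b0 by (simp add: smul_def vadd_def)
    hence "q = smul (c2*a) b1" using qc by (simp add: smul_smul)
    thus ?thesis using case_lemma[OF bl b z12 z21, of "c2*a"] p0 c20 False
      unfolding p_def q_def by simp
  next
    case True
    hence b0: "b \<noteq> 0" using vab v0 by (auto simp: smul_def vadd_def vzero_def)
    hence q0: "q = vzero" using bq smul_zero_cases by blast
    hence p0: "p \<noteq> vzero" using nz by blast
    have c10: "c1 \<noteq> 0" using p0 pc by (auto simp: smul_def vzero_def)
    have "v = smul b b2" using vab True by (simp add: smul_def vadd_def)
    hence "p = smul (c1*b) b2" using pc by (simp add: smul_smul)
    thus ?thesis using case_lemma[OF bl basis_sym[OF b] z21 z12, of "c1*b"] q0 c10 b0
      unfolding p_def q_def by simp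
  qed
qed


lemma A6_bil: "bilinear2 (A6 :: 'a::field alg2)"
  unfolding bilinear2_def A6_def by (simp add: vadd_def smul_def algebra_simps)

lemma A6_nb: "natural_basis (A6 :: 'a::field alg2) (1,0) (0,1)"
  unfolding natural_basis_def by (simp add: basis_iff A6_def vzero_def)

lemma A6_nb2: "natural_basis (A6 :: 'a::field alg2) (0,1) (1,0)"
  unfolding natural_basis_def by (simp add: basis_iff A6_def vzero_def)

lemma A6_evol: "evolution_algebra2 (A6 :: 'a::field alg2)"
  unfolding evolution_algebra2_def using A6_bil A6_nb by blast

lemma A6_sq: "alg_sq (A6 :: 'a::field alg2) = {smul c (1,0) | c. True}"
proof
  show "alg_sq (A6 :: 'a alg2) \<subseteq> {smul c (1,0) | c. True}"
  proof
    fix w :: "'a vec2" assume "w \<in> alg_sq A6"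
    hence "snd w = 0" unfolding alg_sq_def
      by (induction rule: vspan.induct) (auto simp: A6_def vzero_def vadd_def smul_def)
    hence "w = smul (fst w) (1,0)" by (simp add: smul_def prod_eq_iff)
    thus "w \<in> {smul c (1,0) | c. True}" by blast
  qed
next
  show "{smul c (1,0) | c. True} \<subseteq> alg_sq (A6 :: 'a alg2)"
  proof
    fix w :: "'a vec2" assume "w \<in> {smul c (1,0) | c. True}"
    then obtain c where "w = smul c (1,0)" by blast
    hence "w = A6 (0,c) (0,1)" by (simp add: A6_def smul_def)
    thus "w \<in> alg_sq A6" unfolding alg_sq_def by (metis (mono_tags, lifting) mem_Collect_eq vspan_base)
  qed
qed

lemma A6_cube: "alg_cube (A6 :: 'a::field alg2) = {vzero}"
proof
  show "alg_cube (A6 :: 'a alg2) \<subseteq> {vzero}"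
  proof
    fix w :: "'a vec2" assume "w \<in> alg_cube A6"
    thus "w \<in> {vzero}" unfolding alg_cube_def
      by (induction rule: vspan.induct) (auto simp: A6_sq A6_def vzero_def smul_def vadd_def)
  qed
next
  show "{vzero} \<subseteq> alg_cube (A6 :: 'a alg2)" unfolding alg_cube_def using vspan_zero by blast
qed

lemma A6_ps:
  assumes nb: "natural_basis (A6 :: 'a::field alg2) b1 b2"
  shows "pseudo_square A6 b1 b2 \<in> D6"
proof -
  obtain a b where u: "b1 = (a,b)" by (cases b1)
  obtain c d where v: "b2 = (c,d)" by (cases b2)
  have bs: "is_basis2 b1 b2" using nb unfolding natural_basis_def by blast
  have det: "a*d - b*c \<noteq> 0" using bs basis_iff u v by force
  have bd: "b*d = 0" using nb u v unfolding natural_basis_def by (simp add: A6_def vzero_def)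
  show ?thesis
  proof (cases "b = 0")
    case True
    hence a0: "a \<noteq> 0" and d0: "d \<noteq> 0" using det by auto
    have c1: "coords b1 b2 (A6 b1 b1) = (0,0)"
      by (rule coords_eq[OF bs]) (simp add: u v True A6_def vadd_def smul_def)
    have c2: "coords b1 b2 (A6 b2 b2) = (d*d/a,0)"
      by (rule coords_eq[OF bs]) (simp add: u v True A6_def vadd_def smul_def a0)
    have "pseudo_square A6 b1 b2 = {T}"
      unfolding pseudo_square_def c1 c2 using a0 d0 by auto
    thus ?thesis unfolding D6_def by simp
  next
    case False
    hence d0: "d = 0" using bd by simp
    hence c0: "c \<noteq> 0" using det by auto
    have c1: "coords b1 b2 (A6 b1 b1) = (0,b*b/c)"
      by (rule coords_eq[OF bs]) (simp add: u v d0 A6_def vadd_def smul_def c0)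
    have c2: "coords b1 b2 (A6 b2 b2) = (0,0)"
      by (rule coords_eq[OF bs]) (simp add: u v d0 A6_def vadd_def smul_def)
    have "pseudo_square A6 b1 b2 = {D}"
      unfolding pseudo_square_def c1 c2 using False c0 by auto
    thus ?thesis unfolding D6_def by simp
  qed
qed

lemma A6_square: "alg_square (A6 :: 'a::field alg2) = D6"
proof
  show "alg_square (A6 :: 'a alg2) \<subseteq> D6" unfolding alg_square_def using A6_ps by blast
next
  have bs1: "is_basis2 (1::'a,0::'a) (0,1)" by (simp add: basis_iff)
  have bs2: "is_basis2 (0::'a,1::'a) (1,0)" by (simp add: basis_iff)
  have "coords (1::'a,0::'a) (0,1) (A6 (1,0) (1,0)) = (0,0)"
    by (rule coords_eq[OF bs1]) (simp add: A6_def vadd_def smul_def)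
  moreover have "coords (1::'a,0::'a) (0,1) (A6 (0,1) (0,1)) = (1,0)"
    by (rule coords_eq[OF bs1]) (simp add: A6_def vadd_def smul_def)
  ultimately have "pseudo_square (A6 :: 'a alg2) (1,0) (0,1) = {T}"
    unfolding pseudo_square_def by auto
  hence T: "{T} \<in> alg_square (A6 :: 'a alg2)" unfolding alg_square_def using A6_nb by force
  have "coords (0::'a,1::'a) (1,0) (A6 (0,1) (0,1)) = (0,1)"
    by (rule coords_eq[OF bs2]) (simp add: A6_def vadd_def smul_def)
  moreover have "coords (0::'a,1::'a) (1,0) (A6 (1,0) (1,0)) = (0,0)"
    by (rule coords_eq[OF bs2]) (simp add: A6_def vadd_def smul_def)
  ultimately have "pseudo_square (A6 :: 'a alg2) (0,1) (1,0) = {D}"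
    unfolding pseudo_square_def by auto
  hence "{D} \<in> alg_square (A6 :: 'a alg2)" unfolding alg_square_def using A6_nb2 by force
  thus "D6 \<subseteq> alg_square (A6 :: 'a alg2)" using T unfolding D6_def by blast
qed

theorem proposition3p12:
  shows "evolution_algebra2 (A6 :: 'a::field alg2) \<and> dim_one (alg_sq (A6 :: 'a alg2))
     \<and> alg_cube (A6 :: 'a alg2) = {vzero}
     \<and> (\<forall>M :: 'a alg2. evolution_algebra2 M \<and> dim_one (alg_sq M) \<and> alg_cube M = {vzero}
           \<longrightarrow> alg_isomorphic M A6)
     \<and> alg_square (A6 :: 'a alg2) = D6
     \<and> alg_associative (A6 :: 'a alg2)"
proof (intro conjI allI impI)
  show "evolution_algebra2 (A6 :: 'a alg2)" by (rule A6_evol)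
  show "dim_one (alg_sq (A6 :: 'a alg2))" unfolding dim_one_def A6_sq
    by (rule exI[of _ "(1,0)"]) (simp add: vzero_def)
  show "alg_cube (A6 :: 'a alg2) = {vzero}" by (rule A6_cube)
  show "alg_isomorphic M A6" if "evolution_algebra2 M \<and> dim_one (alg_sq M) \<and> alg_cube M = {vzero}"
    for M :: "'a alg2" using classify that by blast
  show "alg_square (A6 :: 'a alg2) = D6" by (rule A6_square)
  show "alg_associative (A6 :: 'a alg2)" unfolding alg_associative_def by (simp add: A6_def)
qed

end
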